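(* Let $T$ be a string, let $1\le j\le |T|$, $1\le i\le j+1$, let $w$ be a string, and let $L=T[1..i-1]$, $R=T[j+1..|T|]$ and $T'=LwR$. Assume $|L|\ge |R|$, $|w|\le |L|/2$, and that the longest border of $Lw$ is longer than $|w|$. Partition the set of borders of $Lw$ into groups $G_1,\dots,G_m$ so that two borders lie in the same group iff they have the same smallest period, and let $p_k$ be the common smallest period of the borders in $G_k$. Assume that $T'$ has a border longer than $R$, and let $b^\star$ be the border of $Lw$ such that $b^\star R$ is the longest border of $T'$; let $k^\star$ be the index of the group containing $b^\star$. Let $\alpha_{k^\star}$ be the exponent of the longest prefix of $T'$ having period $p_{k^\star}$, and let $r_{k^\star}=\mathit{lce}_{T'}(|T'|-|R|-p_{k^\star}+1,\ |T'|-|R|+1)$. If $b^\star$ is periodic, then $b^\star$ is the longest border of $Lw$ whose length is at most $\alpha_{k^\star}p_{k^\star}-r_{k^\star}$.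
   Context: $S[i..j]$ denotes the factor of $S$ from position $i$ to $j$ (empty if $i>j$). A border of a nonempty string $S$ is a string that is both a proper prefix and a proper suffix of $S$. If $S$ has a border $b$ then $|S|-|b|$ is a period of $S$; $\mathsf{per}(S)$ is the smallest period of $S$. The exponent of $S$ is $|S|/\mathsf{per}(S)$; $S$ is periodic if $\mathsf{per}(S)\le|S|/2$. For a string $S$ and positions $a,b$, $\mathit{lce}_S(a,b)$ is the length of the longest common prefix of $S[a..|S|]$ and $S[b..|S|]$. *)

theory Defs
  imports Main "HOL.Real"
begin

text \<open>Strings are lists; paper positions are 1-based, list indices 0-based.\<close>

definition is_border :: "'a list \<Rightarrow> 'a list \<Rightarrow> bool" where
  "is_border S b \<longleftrightarrow> S \<noteq> [] \<and> length b < length S \<and>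
     take (length b) S = b \<and> drop (length S - length b) S = b"

definition is_longest_border :: "'a list \<Rightarrow> 'a list \<Rightarrow> bool" where
  "is_longest_border S b \<longleftrightarrow> is_border S b \<and>
     (\<forall>b'. is_border S b' \<longrightarrow> length b' \<le> length b)"

definition is_period :: "'a list \<Rightarrow> nat \<Rightarrow> bool" where
  "is_period S p \<longleftrightarrow> 0 < p \<and> p \<le> length S \<and>
     (\<forall>i. i + p < length S \<longrightarrow> S ! i = S ! (i + p))"

definition per :: "'a list \<Rightarrow> nat" where
  "per S = (LEAST p. is_period S p)"

definition exponent :: "'a list \<Rightarrow> real" where
  "exponent S = real (length S) / real (per S)"

definition periodic :: "'a list \<Rightarrow> bool" where
  "periodic S \<longleftrightarrow> 2 * per S \<le> length S"

definition longest_prefix_with_period :: "'a list \<Rightarrow> nat \<Rightarrow> 'a list" where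
  "longest_prefix_with_period S p =
     take (GREATEST n. n \<le> length S \<and> is_period (take n S) p) S"

fun lcp_len :: "'a list \<Rightarrow> 'a list \<Rightarrow> nat" where
  "lcp_len (x # xs) (y # ys) = (if x = y then Suc (lcp_len xs ys) else 0)"
| "lcp_len _ _ = 0"

definition lce :: "'a list \<Rightarrow> nat \<Rightarrow> nat \<Rightarrow> nat" where
  "lce S a b = lcp_len (drop (a - 1) S) (drop (b - 1) S)"

end

theory Submission
  imports Defs
begin

lemma lcp_len_le: "lcp_len xs ys \<le> length ys"
  by (induction xs ys rule: lcp_len.induct) auto

lemma lcp_len_nth: "k < lcp_len xs ys \<Longrightarrow> xs ! k = ys ! k"
proof (induction xs ys arbitrary: k rule: lcp_len.induct)
  case (1 x xs y ys)
  then show ?case by (cases k) (auto split: if_splits)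
qed auto

lemma lcp_len_neq: "lcp_len xs ys < length xs \<Longrightarrow> lcp_len xs ys < length ys \<Longrightarrow>
   xs ! lcp_len xs ys \<noteq> ys ! lcp_len xs ys"
  by (induction xs ys rule: lcp_len.induct) auto

lemma main:
  fixes X R bs :: "'a list"
  assumes bX: "is_border X bs" and lb: "is_longest_border (X @ R) (bs @ R)"
    and pb: "periodic bs" and ne: "bs \<noteq> []"
  defines "S \<equiv> X @ R"
  defines "p \<equiv> per bs"
  defines "l \<equiv> (GREATEST n. n \<le> length S \<and> is_period (take n S) p)"
  defines "r \<equiv> lce S (length X - p + 1) (length X + 1)"
  shows "length bs + r \<le> l" "r < length R \<Longrightarrow> l \<le> length bs + r"
    "r = length R \<Longrightarrow> is_border X b' \<Longrightarrow> length b' + length R \<le> l \<Longrightarrow> length b' \<le> length bs"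
    "per (take l S) = p" "r \<le> length R" "0 < p" "l \<le> length S"
proof -
  define n where "n = length X"
  define m where "m = length R"
  define b where "b = length bs"
  define d where "d = n - b"
  have bpos: "b > 0" using ne b_def by simp
  have bn: "b < n" using bX unfolding is_border_def b_def n_def by auto
  have bt: "take b X = bs" and bd: "drop (n - b) X = bs"
    using bX unfolding is_border_def b_def n_def by auto
  have lS: "length S = n + m" unfolding S_def n_def m_def by simp
  have lbB: "is_border S (bs @ R)" using lb unfolding is_longest_border_def S_def by auto
  have F0: "S ! k = S ! (d + k)" if "k < b + m" for k
  proof -
    have t: "take (b+m) S = bs @ R" and dr: "drop (length S - (b+m)) S = bs @ R"
      using lbB unfolding is_border_def b_def m_def by auto
    have "S ! k = take (b+m) S ! k" using that by simp
    also have "\<dots> = drop (length S - (b+m)) S ! k" using t dr by simp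
    also have "\<dots> = S ! (d + k)" using that lS bn unfolding d_def
      by (subst nth_drop) (auto simp: add.commute)
    finally show ?thesis .
  qed
  have iswit: "is_period bs b" unfolding is_period_def b_def using bpos b_def by auto
  have pP: "is_period bs p" unfolding p_def per_def by (rule LeastI[where P="is_period bs", OF iswit])
  have p2: "2 * p \<le> b" using pb unfolding periodic_def p_def b_def .
  have ppos: "0 < p" using pP unfolding is_period_def by auto
  then show "0 < p" .
  have bsS: "bs ! k = S ! (d + k)" if "k < b" for k
  proof -
    have "bs ! k = drop (n - b) X ! k" using bd by simp
    also have "\<dots> = X ! (d + k)" using that bn unfolding d_def by (simp add: n_def)
    also have "\<dots> = S ! (d + k)"
    proof -
      have "d + k < length X" using that bn d_def n_def by simp
      then show ?thesis unfolding S_def by (simp add: nth_append)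
    qed
    finally show ?thesis .
  qed
  have rle: "r \<le> m" unfolding r_def lce_def m_def using lcp_len_le
    by (metis S_def add_diff_cancel_right' append_eq_conv_conj drop_drop plus_1_eq_Suc
        Suc_eq_plus1 add.commute diff_Suc_1)
  then show "r \<le> length R" using m_def by simp
  have F3: "S ! (n - p + q) = S ! (n + q)" if "q < r" for q
  proof -
    have "drop (n - p) S ! q = drop n S ! q"
      using lcp_len_nth[of q "drop (n - p) S" "drop n S"] that
      unfolding r_def lce_def n_def by simp
    moreover have "q < m" using that rle by simp
    ultimately show ?thesis using lS by simp
  qed
  have Pl: "l \<le> length S \<and> is_period (take l S) p" if "k \<le> length S" "is_period (take k S) p" for k
    unfolding l_def by (rule GreatestI_nat[of _ k "length S"]) (use that in auto)
  have lge: "k \<le> l" if "k \<le> length S" "is_period (take k S) p" for k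
    unfolding l_def by (rule Greatest_le_nat[of _ k "length S"]) (use that in auto)
  have per1: "is_period (take (b + r) S) p"
    unfolding is_period_def
  proof (intro conjI allI impI)
    show "0 < p" by fact
    show "p \<le> length (take (b + r) S)" using p2 lS rle bn by simp
    fix i assume i: "i + p < length (take (b + r) S)"
    hence i2: "i + p < b + r" by simp
    have "S ! i = S ! (d + i)" using F0 i2 rle by simp
    moreover have "S ! (i + p) = S ! (d + (i + p))" using F0 i2 rle by simp
    moreover have "S ! (d + i) = S ! (d + (i + p))"
    proof (cases "i + p < b")
      case True
      have "bs ! i = bs ! (i + p)" using pP True b_def unfolding is_period_def by blast
      moreover have "i < b" using True by simp
      ultimately show ?thesis using bsS[of i] bsS[of "i + p"] True by simp
    next
      case False
      define q where "q = i + p - b"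
      have "q < r" using i2 False q_def by simp
      hence "S ! (n - p + q) = S ! (n + q)" by (rule F3)
      moreover have "n - p + q = d + i" using False bn p2 unfolding q_def d_def by simp
      moreover have "n + q = d + (i + p)" using False bn unfolding q_def d_def by simp
      ultimately show ?thesis by simp
    qed
    ultimately show "take (b + r) S ! i = take (b + r) S ! (i + p)" using i by simp
  qed
  have lenbr: "b + r \<le> length S" using lS rle bn by simp
  show c1: "length bs + r \<le> l" using lge[OF lenbr per1] b_def by simp
  have Plx: "l \<le> length S" "is_period (take l S) p" using Pl[OF lenbr per1] by auto
  show "l \<le> length S" by (rule Plx(1))
  have Sper: "S ! i = S ! (i + p)" if "i + p < l" for i
    using Plx that unfolding is_period_def by auto
  show "l \<le> length bs + r" if rm: "r < length R"
  proof (rule ccontr)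
    assume "\<not> l \<le> length bs + r"
    hence "b + r < l" using b_def by simp
    hence "S ! (b + r - p) = S ! (b + r)" using Sper[of "b + r - p"] p2 by simp
    moreover have "S ! (b + r - p) = S ! (d + (b + r - p))" using F0 rm m_def by simp
    moreover have "S ! (b + r) = S ! (d + (b + r))" using F0 rm m_def by simp
    moreover have "d + (b + r - p) = n - p + r" "d + (b + r) = n + r"
      using p2 bn d_def by auto
    ultimately have eq: "S ! (n - p + r) = S ! (n + r)" by simp
    have "drop (n - p) S ! r \<noteq> drop n S ! r"
      using lcp_len_neq[of "drop (n - p) S" "drop n S"] rm lS m_def p2 bn
      unfolding r_def lce_def n_def by simp
    then show False using eq rm lS m_def p2 bn by simp
  qed
  show "length b' \<le> length bs" if rm: "r = length R" and bX': "is_border X b'"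
     and bl: "length b' + length R \<le> l" for b'
  proof (rule ccontr)
    assume "\<not> length b' \<le> length bs"
    hence gt: "b < length b'" using b_def by simp
    define c where "c = length b'"
    have gtc: "b < c" using gt c_def by simp
    have cn: "c < n" using bX' unfolding is_border_def c_def n_def by auto
    have ct: "take c X = b'" and cd: "drop (n - c) X = b'"
      using bX' unfolding is_border_def c_def n_def by auto
    have key: "S ! (c + q) = S ! (n + q)" if "q < m" for q
      using that
    proof (induction q rule: less_induct)
      case (less q)
      have "S ! (c + q - p) = S ! (c + q)" using Sper[of "c + q - p"] less.prems bl rm m_def c_def gtc p2
        by simp
      moreover have "S ! (n - p + q) = S ! (n + q)" using F3 less.prems rm m_def by simp
      moreover have "S ! (c + q - p) = S ! (n - p + q)"
      proof (cases "p \<le> q")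
        case True
        have "S ! (c + (q - p)) = S ! (n + (q - p))" using less.IH[of "q - p"] less.prems ppos True by simp
        then show ?thesis using True p2 bn by (simp add: add_diff_assoc)
      next
        case False
        have j: "c + q - p < c" using False gtc p2 c_def by simp
        have "S ! (c + q - p) = X ! (c + q - p)" unfolding S_def using j cn n_def by (simp add: nth_append)
        also have "\<dots> = take c X ! (c + q - p)" using j by simp
        also have "\<dots> = b' ! (c + q - p)" using ct by simp
        also have "\<dots> = drop (n - c) X ! (c + q - p)" using cd by simp
        also have "\<dots> = X ! (n - c + (c + q - p))" using j cn n_def by simp
        also have "n - c + (c + q - p) = n - p + q" using False cn gtc p2 by simp
        also have "X ! (n - p + q) = S ! (n - p + q)"
        proof -
          have "n - p + q < length X" using False p2 bn n_def by simp
          then show ?thesis unfolding S_def by (simp add: nth_append)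
        qed
        finally show ?thesis .
      qed
      ultimately show ?case by simp
    qed
    have "is_border S (b' @ R)"
      unfolding is_border_def
    proof (intro conjI)
      show "S \<noteq> []" using lS bn by auto
      show "length (b' @ R) < length S" using lS cn c_def m_def by simp
      show "take (length (b' @ R)) S = b' @ R"
      proof (rule nth_equalityI)
        show "length (take (length (b' @ R)) S) = length (b' @ R)" using lS cn c_def m_def by simp
        fix k assume k: "k < length (take (length (b' @ R)) S)"
        hence k2: "k < c + m" using c_def m_def by simp
        show "take (length (b' @ R)) S ! k = (b' @ R) ! k"
        proof (cases "k < c")
          case True
          have "k < length X" using True cn n_def by simp
          have "take (length (b' @ R)) S ! k = S ! k" using k by simp
          also have "\<dots> = X ! k" unfolding S_def using \<open>k < length X\<close> by (simp add: nth_append)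
          also have "\<dots> = take c X ! k" using True by simp
          also have "\<dots> = b' ! k" using ct by simp
          also have "\<dots> = (b' @ R) ! k" using True c_def by (simp add: nth_append)
          finally show ?thesis .
        next
          case False
          have "S ! (c + (k - c)) = S ! (n + (k - c))" using key[of "k - c"] k2 False by simp
          moreover have "take (length (b' @ R)) S ! k = S ! (c + (k - c))" using k False by simp
          moreover have "S ! (n + (k - c)) = R ! (k - c)" unfolding S_def n_def by (simp add: nth_append)
          moreover have "(b' @ R) ! k = R ! (k - c)" using False c_def by (simp add: nth_append)
          ultimately show ?thesis by simp
        qed
      qed
      show "drop (length S - length (b' @ R)) S = b' @ R"
        using cd lS cn c_def m_def unfolding S_def n_def by simp
    qed
    hence "length (b' @ R) \<le> length (bs @ R)" using lb unfolding is_longest_border_def S_def by auto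
    then show False using gt c_def b_def by simp
  qed
  show "per (take l S) = p"
  proof -
    have "per (take l S) \<le> p" unfolding per_def by (rule Least_le) (rule Plx(2))
    have wP: "is_period (take l S) (per (take l S))" unfolding per_def by (rule LeastI[where P="is_period (take l S)", OF Plx(2)])
    have "b \<le> l" using c1 b_def by simp
    have "is_period bs (per (take l S))"
      unfolding is_period_def
    proof (intro conjI allI impI)
      show "0 < per (take l S)" using wP unfolding is_period_def by simp
      show "per (take l S) \<le> length bs" using \<open>per (take l S) \<le> p\<close> p2 b_def by simp
      fix i assume i: "i + per (take l S) < length bs"
      have bsS2: "bs ! k = S ! k" if "k < b" for k
      proof -
        have "bs ! k = take b X ! k" using bt by simp
        also have "\<dots> = X ! k" using that by simp
        also have "\<dots> = S ! k" unfolding S_def using that bn n_def by (simp add: nth_append)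
        finally show ?thesis .
      qed
      have i2: "i + per (take l S) < l" using i b_def \<open>b \<le> l\<close> by simp
      have "take l S ! i = take l S ! (i + per (take l S))"
        using wP i2 Plx(1) unfolding is_period_def by simp
      moreover have "take l S ! i = S ! i" using i2 by simp
      moreover have "take l S ! (i + per (take l S)) = S ! (i + per (take l S))" using i2 by simp
      ultimately show "bs ! i = bs ! (i + per (take l S))"
        using bsS2[of i] bsS2[of "i + per (take l S)"] i b_def by simp
    qed
    hence "p \<le> per (take l S)" unfolding p_def per_def by (rule Least_le)
    with \<open>per (take l S) \<le> p\<close> show ?thesis by simp
  qed
qed

theorem corollary11:
  fixes T w bs :: "'a list" and i j :: nat
  assumes "1 \<le> j" and "j \<le> length T" and "1 \<le> i" and "i \<le> j + 1"
    and "length (take (i - 1) T) \<ge> length (drop j T)"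
    and "real (length w) \<le> real (length (take (i - 1) T)) / 2"
    and "\<exists>b. is_longest_border (take (i - 1) T @ w) b \<and> length b > length w"
    and "\<exists>b. is_border (take (i - 1) T @ w @ drop j T) b \<and> length b > length (drop j T)"
    and "is_border (take (i - 1) T @ w) bs"
    and "is_longest_border (take (i - 1) T @ w @ drop j T) (bs @ drop j T)"
    and "periodic bs"
  shows "let L = take (i - 1) T; R = drop j T; T' = L @ w @ R; p = per bs;
             \<alpha> = exponent (longest_prefix_with_period T' p);
             r = lce T' (length T' - length R - p + 1) (length T' - length R + 1);
             bound = \<alpha> * real p - real r
         in is_border (L @ w) bs \<and> real (length bs) \<le> bound \<and>
            (\<forall>b'. is_border (L @ w) b' \<and> real (length b') \<le> bound \<longrightarrow> length b' \<le> length bs)"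
proof -
  define X where "X = take (i - 1) T @ w"
  define R where "R = drop j T"
  define S where "S = X @ R"
  define p where "p = per bs"
  define l where "l = (GREATEST n. n \<le> length S \<and> is_period (take n S) p)"
  define r where "r = lce S (length X - p + 1) (length X + 1)"
  have bX: "is_border X bs" using assms(9) X_def by simp
  have lb: "is_longest_border (X @ R) (bs @ R)" using assms(10) X_def R_def by simp
  have ne: "bs \<noteq> []"
  proof
    assume "bs = []"
    obtain b where b: "is_border (X @ R) b" "length b > length R" using assms(8) X_def R_def by auto
    have "length b \<le> length (bs @ R)" using lb b unfolding is_longest_border_def by auto
    then show False using b \<open>bs = []\<close> by simp
  qed
  note M = main[OF bX lb assms(11) ne, folded S_def p_def, folded l_def, folded r_def]
  have eqT: "take (i - 1) T @ w @ drop j T = S" unfolding S_def X_def R_def by simp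
  have lenS: "length S - length R = length X" unfolding S_def by simp
  have al: "exponent (take l S) * real p = real l"
    unfolding exponent_def using M(4) M(6) M(7) by (simp add: min_def)
  have bnd: "exponent (longest_prefix_with_period S p) * real p - real r = real l - real r"
    using al unfolding longest_prefix_with_period_def l_def by simp
  have rl: "real (length bs) \<le> real l - real r" using M(1) by simp
  have all: "length b' \<le> length bs" if "is_border X b'" "real (length b') \<le> real l - real r" for b'
  proof (cases "r < length R")
    case True
    then show ?thesis using M(2) that(2) by simp
  next
    case False
    hence "r = length R" using M(5) by simp
    then show ?thesis using M(3)[of b'] that by simp
  qed
  show ?thesis
    unfolding Let_def eqT
    unfolding R_def[symmetric] X_def[symmetric] lenS p_def[symmetric] r_def[symmetric]
    using bnd rl all bX by simp
qed

end
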